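(* Let $n>k$ be integers with $n$ odd and $k$ even, and let $\mathbf{k^n}$ denote the degree sequence $(k,k,\dots,k)$ of length $n$. Then \[\underline{\mu}(\mathbf{k^n})=\begin{cases}k & \text{if } n<2k-3,\\ k-1 & \text{if } n=2k-3,\\ k/2 & \text{if } n\ge 2k-1.\end{cases}\]
   Context: All graphs are finite and simple. For a graph $G=(V,E)$ on $n$ vertices, a fractional vertex cover is a function $f:V\to[0,\infty)$ with $f(u)+f(v)\ge 1$ for every edge $uv\in E$; $\tau^*(G)$ denotes the minimum of $\sum_{v\in V}f(v)$ over all fractional vertex covers. For $E'\subseteq E$ let $G-E'=(V,E\setminus E')$. Define $\mu(G)=\min\{|E'| : E'\subseteq E,\ \tau^*(G-E')<n/2\}$ (equivalently, the minimum number of edges whose deletion leaves no perfect 2-matching, i.e. no spanning subgraph each of whose components is a $K_2$ or an odd cycle). For a graphical degree sequence $\mathbf d$, $\underline{\mu}(\mathbf d)$ is the minimum of $\mu(G)$ over all simple graphs $G$ realizing $\mathbf d$. *)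

theory Defs
  imports Complex_Main
begin

definition simple_graph :: "'a set \<Rightarrow> 'a set set \<Rightarrow> bool" where
  "simple_graph V E \<longleftrightarrow> finite V \<and> (\<forall>e\<in>E. \<exists>u v. e = {u, v} \<and> u \<noteq> v \<and> u \<in> V \<and> v \<in> V)"

definition degree :: "'a set set \<Rightarrow> 'a \<Rightarrow> nat" where
  "degree E v = card {e \<in> E. v \<in> e}"

definition frac_vertex_cover :: "'a set \<Rightarrow> 'a set set \<Rightarrow> ('a \<Rightarrow> real) \<Rightarrow> bool" where
  "frac_vertex_cover V E f \<longleftrightarrow>
     (\<forall>v\<in>V. f v \<ge> 0) \<and> (\<forall>u v. {u, v} \<in> E \<longrightarrow> f u + f v \<ge> 1)"

definition tau_star :: "'a set \<Rightarrow> 'a set set \<Rightarrow> real" where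
  "tau_star V E = Inf {(\<Sum>v\<in>V. f v) | f. frac_vertex_cover V E f}"

definition mu :: "'a set \<Rightarrow> 'a set set \<Rightarrow> nat" where
  "mu V E = Min {card E' | E'. E' \<subseteq> E \<and> tau_star V (E - E') < real (card V) / 2}"

definition mu_low_const :: "nat \<Rightarrow> nat \<Rightarrow> nat" where
  "mu_low_const n k = Min {mu {0..<n} E | E. simple_graph {0..<n} E \<and> (\<forall>v<n. degree E v = k)}"

end

theory Submission
  imports Defs
begin


definition half :: "real \<Rightarrow> bool" where
  "half x \<longleftrightarrow> x = 0 \<or> x = 1/2 \<or> x = 1"

lemma round_core:
  fixes V :: "'a set" and F :: "'a set set"
  assumes fin: "finite V" and FV: "\<forall>e\<in>F. e \<subseteq> V"
  shows "\<forall>f. card {v\<in>V. \<not> half (f v)} = N \<longrightarrow> (\<forall>v\<in>V. 0 \<le> f v \<and> f v \<le> 1) \<longrightarrow>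
     (\<forall>u v. {u,v} \<in> F \<longrightarrow> f u + f v \<ge> 1) \<longrightarrow>
     (\<exists>g. (\<forall>v\<in>V. half (g v)) \<and> (\<forall>u v. {u,v} \<in> F \<longrightarrow> g u + g v \<ge> 1) \<and>
          (\<Sum>v\<in>V. g v) \<le> (\<Sum>v\<in>V. f v))"
proof (induction N rule: less_induct)
  case (less N)
  show ?case
  proof (intro allI impI)
    fix f :: "'a \<Rightarrow> real"
    assume cN: "card {v\<in>V. \<not> half (f v)} = N"
      and rng: "\<forall>v\<in>V. 0 \<le> f v \<and> f v \<le> 1"
      and cov: "\<forall>u v. {u,v} \<in> F \<longrightarrow> f u + f v \<ge> 1"
    have inV: "u \<in> V" "v \<in> V" if "{u,v} \<in> F" for u v using FV that by auto
    define A where "A = {v\<in>V. 0 < f v \<and> f v < 1/2}"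
    define B where "B = {v\<in>V. 1/2 < f v \<and> f v < 1}"
    have NH: "{v\<in>V. \<not> half (f v)} = A \<union> B"
      using rng by (auto simp: A_def B_def half_def)
    have finA: "finite A" and finB: "finite B" using fin by (auto simp: A_def B_def)
    have AB: "A \<inter> B = {}" by (auto simp: A_def B_def)
    show "\<exists>g. (\<forall>v\<in>V. half (g v)) \<and> (\<forall>u v. {u,v} \<in> F \<longrightarrow> g u + g v \<ge> 1) \<and>
          (\<Sum>v\<in>V. g v) \<le> (\<Sum>v\<in>V. f v)"
    proof (cases "A \<union> B = {}")
      case True
      then have "\<forall>v\<in>V. half (f v)" using NH by auto
      then show ?thesis using cov by blast
    next
      case False
      show ?thesis
      proof (cases "card B \<le> card A")
        case True
        define X where "X = (f ` A) \<union> ((\<lambda>v. 1 - f v) ` B)"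
        have finX: "finite X" using finA finB by (simp add: X_def)
        have neX: "X \<noteq> {}" using False by (auto simp: X_def)
        define eps where "eps = Min X"
        have epsle: "\<And>x. x \<in> X \<Longrightarrow> eps \<le> x" using finX by (simp add: eps_def)
        have epsin: "eps \<in> X" using finX neX by (simp add: eps_def)
        have Xpos: "\<And>x. x \<in> X \<Longrightarrow> 0 < x" by (auto simp: X_def A_def B_def)
        have epos: "0 < eps" using Xpos epsin by blast
        have eA: "eps \<le> f v" if "v \<in> A" for v using epsle that by (auto simp: X_def)
        have eB: "eps \<le> 1 - f v" if "v \<in> B" for v using epsle that by (auto simp: X_def)
        define f' where "f' = (\<lambda>v. if v \<in> A then f v - eps else if v \<in> B then f v + eps else f v)"
        have rng': "\<forall>v\<in>V. 0 \<le> f' v \<and> f' v \<le> 1"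
        proof
          fix v assume "v \<in> V"
          then show "0 \<le> f' v \<and> f' v \<le> 1" using rng eA[of v] eB[of v] epos
            by (auto simp: f'_def A_def B_def)
        qed
        have cov': "\<forall>u v. {u,v} \<in> F \<longrightarrow> f' u + f' v \<ge> 1"
        proof (intro allI impI)
          fix u v assume e: "{u,v} \<in> F"
          have uv: "f u + f v \<ge> 1" using cov e by blast
          have "{v,u} \<in> F" using e by (simp add: insert_commute)
          have uV: "u \<in> V" and vV: "v \<in> V" using inV e by auto
          have hA: "f u \<le> 1" "f v \<le> 1" "0 \<le> f u" "0 \<le> f v" using rng uV vV by auto
          show "f' u + f' v \<ge> 1"
            using uv hA eA[of u] eA[of v] eB[of u] eB[of v] epos uV vV
            by (auto simp: f'_def A_def B_def)
        qed
        have sumf': "(\<Sum>v\<in>V. f' v) = (\<Sum>v\<in>V. f v) - eps * card A + eps * card B"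
        proof -
          have AV: "A \<subseteq> V" and BV: "B \<subseteq> V" by (auto simp: A_def B_def)
          have "(\<Sum>v\<in>V. f' v) = (\<Sum>v\<in>V. f v + (if v \<in> B then eps else 0) - (if v \<in> A then eps else 0))"
            using AB by (intro sum.cong) (auto simp: f'_def)
          also have "\<dots> = (\<Sum>v\<in>V. f v) + (\<Sum>v\<in>V. (if v \<in> B then eps else 0)) - (\<Sum>v\<in>V. (if v \<in> A then eps else 0))"
            by (simp add: sum.distrib sum_subtractf)
          also have "(\<Sum>v\<in>V. (if v \<in> B then eps else 0)) = eps * card B"
            using fin BV by (simp add: sum.If_cases Int_absorb1)
          also have "(\<Sum>v\<in>V. (if v \<in> A then eps else 0)) = eps * card A"
            using fin AV by (simp add: sum.If_cases Int_absorb1)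
          finally show ?thesis by simp
        qed
        have sle: "(\<Sum>v\<in>V. f' v) \<le> (\<Sum>v\<in>V. f v)"
          using sumf' True epos by (simp add: mult_left_mono)
        have sub: "{v\<in>V. \<not> half (f' v)} \<subseteq> (A \<union> B)"
        proof
          fix v assume v: "v \<in> {v\<in>V. \<not> half (f' v)}"
          show "v \<in> A \<union> B"
          proof (rule ccontr)
            assume n: "v \<notin> A \<union> B"
            then have "f' v = f v" by (auto simp: f'_def)
            then show False using v n NH by auto
          qed
        qed
        obtain w where w: "w \<in> A \<union> B" "\<not> (\<not> half (f' w))"
        proof -
          from epsin obtain w where "w \<in> A \<and> eps = f w \<or> w \<in> B \<and> eps = 1 - f w"
            by (auto simp: X_def)
          then show ?thesis
          proof
            assume h: "w \<in> A \<and> eps = f w"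
            then have "w \<notin> B" using AB by auto
            then have "f' w = 0" using h by (simp add: f'_def)
            then show ?thesis using that[of w] h by (simp add: half_def)
          next
            assume h: "w \<in> B \<and> eps = 1 - f w"
            then have "w \<notin> A" using AB by auto
            then have "f' w = 1" using h by (simp add: f'_def)
            then show ?thesis using that[of w] h by (simp add: half_def)
          qed
        qed
        have "{v\<in>V. \<not> half (f' v)} \<subseteq> (A \<union> B) - {w}" using sub w by auto
        then have "card {v\<in>V. \<not> half (f' v)} < card (A \<union> B)"
          using w finA finB by (meson card_Diff1_less card_mono finite_Diff finite_UnI le_less_trans)
        then have lt: "card {v\<in>V. \<not> half (f' v)} < N" using cN NH by simp
        have "\<exists>g. (\<forall>v\<in>V. half (g v)) \<and> (\<forall>u v. {u,v} \<in> F \<longrightarrow> g u + g v \<ge> 1) \<and>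
          (\<Sum>v\<in>V. g v) \<le> (\<Sum>v\<in>V. f' v)"
          using less.IH[OF lt] rng' cov' by blast
        then show ?thesis using sle by (meson order_trans)
      next
        case False2: False
        define X where "X = ((\<lambda>v. 1/2 - f v) ` A) \<union> ((\<lambda>v. f v - 1/2) ` B)"
        have finX: "finite X" using finA finB by (simp add: X_def)
        have neX: "X \<noteq> {}" using False by (auto simp: X_def)
        define eps where "eps = Min X"
        have epsle: "\<And>x. x \<in> X \<Longrightarrow> eps \<le> x" using finX by (simp add: eps_def)
        have epsin: "eps \<in> X" using finX neX by (simp add: eps_def)
        have Xpos: "\<And>x. x \<in> X \<Longrightarrow> 0 < x" by (auto simp: X_def A_def B_def)
        have epos: "0 < eps" using Xpos epsin by blast
        have eA: "eps \<le> 1/2 - f v" if "v \<in> A" for v using epsle that by (auto simp: X_def)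
        have eB: "eps \<le> f v - 1/2" if "v \<in> B" for v using epsle that by (auto simp: X_def)
        define f' where "f' = (\<lambda>v. if v \<in> A then f v + eps else if v \<in> B then f v - eps else f v)"
        have rng': "\<forall>v\<in>V. 0 \<le> f' v \<and> f' v \<le> 1"
        proof
          fix v assume "v \<in> V"
          then show "0 \<le> f' v \<and> f' v \<le> 1" using rng eA[of v] eB[of v] epos
            by (auto simp: f'_def A_def B_def)
        qed
        have cov': "\<forall>u v. {u,v} \<in> F \<longrightarrow> f' u + f' v \<ge> 1"
        proof (intro allI impI)
          fix u v assume e: "{u,v} \<in> F"
          have uv: "f u + f v \<ge> 1" using cov e by blast
          have uV: "u \<in> V" and vV: "v \<in> V" using inV e by auto
          have hA: "f u \<le> 1" "f v \<le> 1" "0 \<le> f u" "0 \<le> f v" using rng uV vV by auto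
          show "f' u + f' v \<ge> 1"
            using uv hA eA[of u] eA[of v] eB[of u] eB[of v] epos uV vV
            by (auto simp: f'_def A_def B_def)
        qed
        have sumf': "(\<Sum>v\<in>V. f' v) = (\<Sum>v\<in>V. f v) + eps * card A - eps * card B"
        proof -
          have AV: "A \<subseteq> V" and BV: "B \<subseteq> V" by (auto simp: A_def B_def)
          have "(\<Sum>v\<in>V. f' v) = (\<Sum>v\<in>V. f v + (if v \<in> A then eps else 0) - (if v \<in> B then eps else 0))"
            using AB by (intro sum.cong) (auto simp: f'_def)
          also have "\<dots> = (\<Sum>v\<in>V. f v) + (\<Sum>v\<in>V. (if v \<in> A then eps else 0)) - (\<Sum>v\<in>V. (if v \<in> B then eps else 0))"
            by (simp add: sum.distrib sum_subtractf)
          also have "(\<Sum>v\<in>V. (if v \<in> B then eps else 0)) = eps * card B"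
            using fin BV by (simp add: sum.If_cases Int_absorb1)
          also have "(\<Sum>v\<in>V. (if v \<in> A then eps else 0)) = eps * card A"
            using fin AV by (simp add: sum.If_cases Int_absorb1)
          finally show ?thesis by simp
        qed
        have sle: "(\<Sum>v\<in>V. f' v) \<le> (\<Sum>v\<in>V. f v)"
          using sumf' False2 epos by (simp add: mult_left_mono)
        have sub: "{v\<in>V. \<not> half (f' v)} \<subseteq> (A \<union> B)"
        proof
          fix v assume v: "v \<in> {v\<in>V. \<not> half (f' v)}"
          show "v \<in> A \<union> B"
          proof (rule ccontr)
            assume n: "v \<notin> A \<union> B"
            then have "f' v = f v" by (auto simp: f'_def)
            then show False using v n NH by auto
          qed
        qed
        obtain w where w: "w \<in> A \<union> B" "\<not> (\<not> half (f' w))"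
        proof -
          from epsin obtain w where "w \<in> A \<and> eps = 1/2 - f w \<or> w \<in> B \<and> eps = f w - 1/2"
            by (auto simp: X_def)
          then show ?thesis
          proof
            assume h: "w \<in> A \<and> eps = 1/2 - f w"
            then have "w \<notin> B" using AB by auto
            then have "f' w = 1/2" using h by (simp add: f'_def)
            then show ?thesis using that[of w] h by (simp add: half_def)
          next
            assume h: "w \<in> B \<and> eps = f w - 1/2"
            then have "w \<notin> A" using AB by auto
            then have "f' w = 1/2" using h by (simp add: f'_def)
            then show ?thesis using that[of w] h by (simp add: half_def)
          qed
        qed
        have "{v\<in>V. \<not> half (f' v)} \<subseteq> (A \<union> B) - {w}" using sub w by auto
        then have "card {v\<in>V. \<not> half (f' v)} < card (A \<union> B)"
          using w finA finB by (meson card_Diff1_less card_mono finite_Diff finite_UnI le_less_trans)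
        then have lt: "card {v\<in>V. \<not> half (f' v)} < N" using cN NH by simp
        have "\<exists>g. (\<forall>v\<in>V. half (g v)) \<and> (\<forall>u v. {u,v} \<in> F \<longrightarrow> g u + g v \<ge> 1) \<and>
          (\<Sum>v\<in>V. g v) \<le> (\<Sum>v\<in>V. f' v)"
          using less.IH[OF lt] rng' cov' by blast
        then show ?thesis using sle by (meson order_trans)
      qed
    qed
  qed
qed


lemma round_cover:
  assumes fin: "finite V" and FV: "\<forall>e\<in>F. e \<subseteq> V" and fc: "frac_vertex_cover V F f"
  shows "\<exists>g. (\<forall>v\<in>V. half (g v)) \<and> (\<forall>u v. {u,v} \<in> F \<longrightarrow> g u + g v \<ge> 1) \<and>
          (\<Sum>v\<in>V. g v) \<le> (\<Sum>v\<in>V. f v)"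
proof -
  define f1 where "f1 = (\<lambda>v. min (f v) 1)"
  have r: "\<forall>v\<in>V. 0 \<le> f1 v \<and> f1 v \<le> 1" using fc by (auto simp: f1_def frac_vertex_cover_def)
  have c: "\<forall>u v. {u,v} \<in> F \<longrightarrow> f1 u + f1 v \<ge> 1"
  proof (intro allI impI)
    fix u v assume e: "{u,v} \<in> F"
    have "u \<in> V" "v \<in> V" using FV e by auto
    then have "0 \<le> f u" "0 \<le> f v" using fc by (auto simp: frac_vertex_cover_def)
    moreover have "f u + f v \<ge> 1" using fc e by (auto simp: frac_vertex_cover_def)
    ultimately show "f1 u + f1 v \<ge> 1" by (auto simp: f1_def min_def)
  qed
  have s: "(\<Sum>v\<in>V. f1 v) \<le> (\<Sum>v\<in>V. f v)" by (rule sum_mono) (simp add: f1_def)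
  have "\<exists>g. (\<forall>v\<in>V. half (g v)) \<and> (\<forall>u v. {u,v} \<in> F \<longrightarrow> g u + g v \<ge> 1) \<and>
          (\<Sum>v\<in>V. g v) \<le> (\<Sum>v\<in>V. f1 v)"
    using round_core[OF fin FV] r c by blast
  then show ?thesis using s by (meson order_trans)
qed

lemma card_inc_sum:
  assumes "finite E" "finite S"
  shows "(\<Sum>v\<in>S. card {e\<in>E. v \<in> e}) = (\<Sum>e\<in>E. card (e \<inter> S))"
proof -
  have "(\<Sum>v\<in>S. card {e\<in>E. v \<in> e}) = (\<Sum>v\<in>S. \<Sum>e\<in>E. (if v \<in> e then 1 else 0))"
    using assms by (simp add: sum.If_cases Int_def)
  also have "\<dots> = (\<Sum>e\<in>E. \<Sum>v\<in>S. (if v \<in> e then 1 else 0))" by (rule sum.swap)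
  also have "\<dots> = (\<Sum>e\<in>E. card (e \<inter> S))"
    using assms by (simp add: sum.If_cases Int_def conj_commute)
  finally show ?thesis .
qed

lemma double_count:
  fixes h :: "'a \<Rightarrow> real"
  assumes "finite E" "finite V" "\<forall>e\<in>E. e \<subseteq> V"
  shows "(\<Sum>e\<in>E. \<Sum>w\<in>e. h w) = (\<Sum>v\<in>V. h v * real (card {e\<in>E. v \<in> e}))"
proof -
  have "(\<Sum>e\<in>E. \<Sum>w\<in>e. h w) = (\<Sum>e\<in>E. \<Sum>w\<in>V. (if w \<in> e then h w else 0))"
  proof (rule sum.cong)
    fix e assume "e \<in> E"
    then have "e \<subseteq> V" using assms by auto
    then have "V \<inter> {w. w \<in> e} = e" by auto
    then show "(\<Sum>w\<in>e. h w) = (\<Sum>w\<in>V. (if w \<in> e then h w else 0))"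
      using assms by (simp add: sum.If_cases)
  qed simp
  also have "\<dots> = (\<Sum>w\<in>V. \<Sum>e\<in>E. (if w \<in> e then h w else 0))" by (rule sum.swap)
  also have "\<dots> = (\<Sum>v\<in>V. h v * real (card {e\<in>E. v \<in> e}))"
  proof (rule sum.cong)
    fix w assume "w \<in> V"
    have "E \<inter> {e. w \<in> e} = {e\<in>E. w \<in> e}" by auto
    then show "(\<Sum>e\<in>E. (if w \<in> e then h w else 0)) = h w * real (card {e\<in>E. w \<in> e})"
      using assms by (simp add: sum.If_cases)
  qed simp
  finally show ?thesis .
qed

lemma sg_edge: "simple_graph V E \<Longrightarrow> e \<in> E \<Longrightarrow> \<exists>u v. e = {u,v} \<and> u \<noteq> v \<and> u \<in> V \<and> v \<in> V"
  by (auto simp: simple_graph_def)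

lemma sg_sub: "simple_graph V E \<Longrightarrow> \<forall>e\<in>E. e \<subseteq> V"
  by (fastforce simp: simple_graph_def)

lemma sg_finE: "simple_graph V E \<Longrightarrow> finite E"
proof -
  assume a: "simple_graph V E"
  then have "E \<subseteq> Pow V" using sg_sub by blast
  moreover have "finite V" using a by (simp add: simple_graph_def)
  ultimately show ?thesis by (meson finite_Pow_iff finite_subset)
qed


lemma ar1: fixes t k :: nat assumes "2 \<le> t" "t + 3 \<le> k" "6 \<le> k" shows "2*k \<le> (t+1)*(k-t)"
proof -
  obtain r where k: "k = t + 3 + r" using assms(2) le_Suc_ex by (metis add.commute add.left_commute) 
  have e: "(t+1)*(k-t) = t*r + r + 3*t + 3" by (simp add: k algebra_simps)
  have h: "2*r \<le> t*r" using assms(1) by (simp add: mult_le_mono1)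
  show ?thesis
  proof (cases "r = 0")
    case True then show ?thesis using e k assms by simp
  next
    case False then show ?thesis using h e k assms by linarith
  qed
qed
lemma ar2: fixes t k :: nat assumes "1 \<le> t" "t + 2 \<le> k" shows "2*(k-1) \<le> (t+1)*(k-t)"
proof -
  obtain r where k: "k = t + 2 + r" using assms(2) le_Suc_ex by (metis add.commute add.left_commute) 
  have e: "(t+1)*(k-t) = t*r + r + 2*t + 2" by (simp add: k algebra_simps)
  have "r \<le> t*r" using assms(1) by (simp add: mult_le_mono1)
  then show ?thesis using e k assms by auto
qed


lemma lb_core:
  fixes V :: "'a set" and E E' :: "'a set set" and g :: "'a \<Rightarrow> real"
  assumes sg: "simple_graph V E" and reg: "\<forall>v\<in>V. degree E v = k" and sub: "E' \<subseteq> E"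
    and hg: "\<forall>v\<in>V. half (g v)" and cov: "\<forall>u v. {u,v} \<in> E - E' \<longrightarrow> g u + g v \<ge> 1"
    and sm: "(\<Sum>v\<in>V. g v) < real (card V) / 2"
    and kn: "k < card V"
  shows "k \<le> 2 * card E'" and "card V + 5 \<le> 2*k \<longrightarrow> k \<le> card E'"
    and "card V + 3 = 2*k \<longrightarrow> k - 1 \<le> card E'"
proof -
  define n where "n = card V"
  have finV: "finite V" using sg by (simp add: simple_graph_def)
  have finE: "finite E" using sg_finE[OF sg] .
  have finE': "finite E'" using finE sub finite_subset by blast
  have EV: "\<forall>e\<in>E. e \<subseteq> V" using sg_sub[OF sg] .
  have g0: "\<forall>v\<in>V. 0 \<le> g v" using hg by (auto simp: half_def)
  define c where "c = (\<lambda>v. if g v = 0 then 0 else if g v = 1/2 then 1 else (2::nat))"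
  have c2: "2 * g v = real (c v)" if "v \<in> V" for v using hg that by (auto simp: c_def half_def)
  have "real (\<Sum>v\<in>V. c v) = (\<Sum>v\<in>V. 2 * g v)" using c2 by (simp add: of_nat_sum)
  also have "\<dots> = 2 * (\<Sum>v\<in>V. g v)" by (simp add: sum_distrib_left)
  finally have csum: "real (\<Sum>v\<in>V. c v) = 2 * (\<Sum>v\<in>V. g v)" .
  have "real (\<Sum>v\<in>V. c v) < real n" using csum sm unfolding n_def by linarith
  then have cn: "(\<Sum>v\<in>V. c v) < n" by (simp only: of_nat_less_iff)
  define S where "S = {v\<in>V. g v = 0}"
  define T where "T = {v\<in>V. g v = 1}"
  have SV: "S \<subseteq> V" and TV: "T \<subseteq> V" by (auto simp: S_def T_def)
  have finS: "finite S" and finT: "finite T" using finV SV TV finite_subset by auto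
  have ST: "S \<inter> T = {}" by (auto simp: S_def T_def)
  have "(\<Sum>v\<in>V. c v + (if v \<in> S then 1 else 0)) = (\<Sum>v\<in>V. 1 + (if v \<in> T then 1 else 0))"
    using hg by (intro sum.cong) (auto simp: c_def S_def T_def half_def)
  moreover have "(\<Sum>v\<in>V. c v + (if v \<in> S then 1 else 0)) = (\<Sum>v\<in>V. c v) + card S"
    using finV SV by (subst sum.distrib) (simp add: sum.If_cases Int_absorb1)
  moreover have "(\<Sum>v\<in>V. 1 + (if v \<in> T then 1 else (0::nat))) = n + card T"
    using finV TV by (subst sum.distrib) (simp add: sum.If_cases Int_absorb1 n_def)
  ultimately have "(\<Sum>v\<in>V. c v) + card S = n + card T" by simp
  then have TS: "card T < card S" using cn by linarith
  have "card S + card T = card (S \<union> T)" using card_Un_disjoint[OF finS finT ST] by simp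
  also have "\<dots> \<le> n" unfolding n_def using SV TV finV by (intro card_mono) auto
  finally have STn: "card S + card T \<le> n" .
  have dcg: "(\<Sum>e\<in>E. \<Sum>w\<in>e. g w) = real k * (\<Sum>v\<in>V. g v)"
    using double_count[OF finE finV EV, of g] reg by (simp add: degree_def sum_distrib_left mult.commute)
  have dc1: "(\<Sum>e\<in>E. \<Sum>w\<in>e. (1::real)) = real k * real n"
    using double_count[OF finE finV EV, of "\<lambda>_. 1"] reg by (simp add: degree_def n_def)
  have e2: "(\<Sum>w\<in>e. (1::real)) = 2" if "e \<in> E" for e
    using sg_edge[OF sg that] by auto
  have cardE: "2 * real (card E) = real k * real n" using dc1 e2 by simp
  have "(\<Sum>e\<in>E. (if e \<in> E' then 0 else (1::real))) \<le> (\<Sum>e\<in>E. \<Sum>w\<in>e. g w)"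
  proof (rule sum_mono)
    fix e assume eE: "e \<in> E"
    obtain u v where uv: "e = {u,v}" "u \<noteq> v" "u \<in> V" "v \<in> V" using sg_edge[OF sg eE] by blast
    have s: "(\<Sum>w\<in>e. g w) = g u + g v" using uv by simp
    show "(if e \<in> E' then 0 else 1) \<le> (\<Sum>w\<in>e. g w)"
      using s cov uv eE g0 by auto
  qed
  moreover have "(\<Sum>e\<in>E. (if e \<in> E' then 0 else (1::real))) = real (card E) - real (card E')"
  proof -
    have "(\<Sum>e\<in>E. (if e \<in> E' then 0 else (1::real))) = real (card (E - E'))"
      using finE by (simp add: sum.If_cases Diff_eq)
    also have "\<dots> = real (card E) - real (card E')"
      using card_Diff_subset[OF finE' sub] card_mono[OF finE sub] by simp
    finally show ?thesis .
  qed
  ultimately have A1: "real (card E) - real (card E') \<le> real k * (\<Sum>v\<in>V. g v)" using dcg by simp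
  have "(\<Sum>v\<in>V. c v) + 1 \<le> n" using cn by simp
  then have "real ((\<Sum>v\<in>V. c v) + 1) \<le> real n" by (simp only: of_nat_le_iff)
  then have "2 * (\<Sum>v\<in>V. g v) \<le> real n - 1" using csum by simp
  then have "real k * (2 * (\<Sum>v\<in>V. g v)) \<le> real k * (real n - 1)" by (simp add: mult_left_mono)
  then have "2 * real (card E) - 2 * real (card E') \<le> real k * real n - real k" using A1
    by (simp add: algebra_simps)
  then show "k \<le> 2 * card E'" using cardE by simp
  define d where "d = (\<lambda>v. card {e\<in>E'. v \<in> e})"
  have dle: "d v \<le> card E'" for v unfolding d_def using finE' by (intro card_mono) auto
  have kd: "k \<le> d v + card T" if vS: "v \<in> S" for v
  proof -
    have vV: "v \<in> V" and gv: "g v = 0" using vS by (auto simp: S_def)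
    have "{e\<in>E. v \<in> e} \<subseteq> {e\<in>E'. v \<in> e} \<union> (\<lambda>w. {v,w}) ` T"
    proof
      fix e assume "e \<in> {e\<in>E. v \<in> e}"
      then have eE: "e \<in> E" and ve: "v \<in> e" by auto
      show "e \<in> {e\<in>E'. v \<in> e} \<union> (\<lambda>w. {v,w}) ` T"
      proof (cases "e \<in> E'")
        case True then show ?thesis using ve by auto
      next
        case False
        obtain x y where xy: "e = {x,y}" "x \<noteq> y" "x \<in> V" "y \<in> V" using sg_edge[OF sg eE] by blast
        obtain w where w: "e = {v,w}" "w \<in> V" using xy ve by auto
        have "g v + g w \<ge> 1" using cov w eE False by auto
        then have "g w = 1" using gv hg w by (auto simp: half_def)
        then have "w \<in> T" using w by (auto simp: T_def)
        then show ?thesis using w by auto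
      qed
    qed
    then have "card {e\<in>E. v \<in> e} \<le> card ({e\<in>E'. v \<in> e} \<union> (\<lambda>w. {v,w}) ` T)"
      using finE' finT by (intro card_mono) auto
    also have "\<dots> \<le> d v + card ((\<lambda>w. {v,w}) ` T)" unfolding d_def by (rule card_Un_le)
    also have "\<dots> \<le> d v + card T" using card_image_le[OF finT] by simp
    finally show ?thesis using reg vV by (simp add: degree_def)
  qed
  have sumd: "(\<Sum>v\<in>S. d v) \<le> 2 * card E'"
  proof -
    have "(\<Sum>v\<in>S. d v) = (\<Sum>e\<in>E'. card (e \<inter> S))" unfolding d_def by (rule card_inc_sum[OF finE' finS])
    also have "\<dots> \<le> (\<Sum>e\<in>E'. 2)"
    proof (rule sum_mono)
      fix e assume "e \<in> E'"
      then obtain u v where "e = {u,v}" using sub sg_edge[OF sg] by blast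
      then have "card e \<le> 2" by (simp add: card_insert_le_m1)
      moreover have "card (e \<inter> S) \<le> card e" using \<open>e = {u,v}\<close> by (intro card_mono) auto
      ultimately show "card (e \<inter> S) \<le> 2" by simp
    qed
    finally show ?thesis by simp
  qed
  have gen: "card S * (k - card T) \<le> 2 * card E'"
  proof -
    have "card S * (k - card T) = (\<Sum>v\<in>S. k - card T)" by simp
    also have "\<dots> \<le> (\<Sum>v\<in>S. d v)" using kd by (intro sum_mono) (simp add: le_diff_conv)
    finally show ?thesis using sumd by simp
  qed
  have gen2: "(card T + 1) * (k - card T) \<le> 2 * card E'"
  proof -
    have "card T + 1 \<le> card S" using TS by simp
    then have "(card T + 1) * (k - card T) \<le> card S * (k - card T)" by (rule mult_le_mono1)
    then show ?thesis using gen by linarith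
  qed
  have t0: "k \<le> card E'" if "card T = 0"
  proof -
    obtain a where "a \<in> S" using TS by fastforce
    then show ?thesis using kd[of a] dle[of a] that by simp
  qed
  show "card V + 5 \<le> 2*k \<longrightarrow> k \<le> card E'"
  proof
    assume h: "card V + 5 \<le> 2*k"
    have k6: "6 \<le> k" using h kn by simp
    have t3: "card T + 3 \<le> k" using h STn TS n_def by linarith
    consider "card T = 0" | "card T = 1" | "2 \<le> card T" by linarith
    then show "k \<le> card E'"
    proof cases
      case 1 then show ?thesis using t0 by simp
    next
      case 2
      obtain a where a: "a \<in> S" using TS by fastforce
      have "card (S - {a}) > 0" using TS 2 a finS by simp
      then obtain b where b: "b \<in> S - {a}" by (metis card_gt_0_iff ex_in_conv)
      have ab: "a \<in> S" "b \<in> S" "a \<noteq> b" using a b by auto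
      have da: "k - 1 \<le> d a" and db: "k - 1 \<le> d b" using kd[OF ab(1)] kd[OF ab(2)] 2 by auto
      have int: "{e\<in>E'. a \<in> e} \<inter> {e\<in>E'. b \<in> e} \<subseteq> {{a,b}}"
      proof
        fix e assume "e \<in> {e\<in>E'. a \<in> e} \<inter> {e\<in>E'. b \<in> e}"
        then have "e \<in> E'" "a \<in> e" "b \<in> e" by auto
        then obtain x y where "e = {x,y}" using sub sg_edge[OF sg] by blast
        then show "e \<in> {{a,b}}" using \<open>a \<in> e\<close> \<open>b \<in> e\<close> ab(3) by auto
      qed
      have ci: "card ({e\<in>E'. a \<in> e} \<inter> {e\<in>E'. b \<in> e}) \<le> 1"
        using card_mono[OF _ int] by simp
      have cu: "card ({e\<in>E'. a \<in> e} \<union> {e\<in>E'. b \<in> e}) \<le> card E'"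
        using finE' by (intro card_mono) auto
      have "card ({e\<in>E'. a \<in> e} \<union> {e\<in>E'. b \<in> e}) + card ({e\<in>E'. a \<in> e} \<inter> {e\<in>E'. b \<in> e}) = d a + d b"
        unfolding d_def by (rule card_Un_Int[symmetric]) (use finE' in auto)
      then show ?thesis using ci cu da db k6 by linarith
    next
      case 3
      have "2*k \<le> (card T + 1)*(k - card T)" using ar1[OF 3 t3 k6] .
      then show ?thesis using gen2 by linarith
    qed
  qed
  show "card V + 3 = 2*k \<longrightarrow> k - 1 \<le> card E'"
  proof
    assume h: "card V + 3 = 2*k"
    have t2: "card T + 2 \<le> k" using h STn TS n_def by linarith
    consider "card T = 0" | "1 \<le> card T" by linarith
    then show "k - 1 \<le> card E'"
    proof cases
      case 1 then show ?thesis using t0 by simp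
    next
      case 2
      have "2*(k-1) \<le> (card T + 1)*(k - card T)" using ar2[OF 2 t2] .
      then show ?thesis using gen2 by linarith
    qed
  qed
qed


lemma fvc_nonempty: "frac_vertex_cover V F (\<lambda>_. 1)"
  by (simp add: frac_vertex_cover_def)

lemma tau_le:
  assumes "frac_vertex_cover V F f"
  shows "tau_star V F \<le> (\<Sum>v\<in>V. f v)"
proof -
  have "bdd_below {(\<Sum>v\<in>V. f v) | f. frac_vertex_cover V F f}"
    by (rule bdd_belowI[of _ 0]) (auto simp: frac_vertex_cover_def intro: sum_nonneg)
  then show ?thesis unfolding tau_star_def using assms by (intro cInf_lower) auto
qed

lemma tau_lt_ex:
  assumes "tau_star V F < x"
  shows "\<exists>f. frac_vertex_cover V F f \<and> (\<Sum>v\<in>V. f v) < x"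
proof -
  have ne: "{(\<Sum>v\<in>V. f v) | f. frac_vertex_cover V F f} \<noteq> {}" using fvc_nonempty by blast
  from cInf_lessD[OF ne assms[unfolded tau_star_def]] show ?thesis by blast
qed

lemma tau_empty: "tau_star V {} \<le> 0"
proof -
  have "frac_vertex_cover V {} (\<lambda>_. 0)" by (simp add: frac_vertex_cover_def)
  from tau_le[OF this] show ?thesis by simp
qed

lemma mu_set_fin: "finite E \<Longrightarrow> finite {card E' | E'. E' \<subseteq> E \<and> tau_star V (E - E') < real (card V) / 2}"
proof -
  assume "finite E"
  then have "finite (card ` Pow E)" by simp
  moreover have "{card E' | E'. E' \<subseteq> E \<and> tau_star V (E - E') < real (card V) / 2} \<subseteq> card ` Pow E" by auto
  ultimately show ?thesis by (rule finite_subset[rotated])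
qed

lemma mu_le:
  assumes "finite E" "E0 \<subseteq> E" "tau_star V (E - E0) < real (card V) / 2"
  shows "mu V E \<le> card E0"
  unfolding mu_def using assms by (intro Min_le mu_set_fin) auto

lemma mu_ge:
  assumes "finite E" "0 < card V"
    and "\<And>E'. E' \<subseteq> E \<Longrightarrow> tau_star V (E - E') < real (card V) / 2 \<Longrightarrow> b \<le> card E'"
  shows "b \<le> mu V E"
proof -
  have "tau_star V (E - E) < real (card V) / 2" using tau_empty[of V] assms(2) by simp
  then have ne: "{card E' | E'. E' \<subseteq> E \<and> tau_star V (E - E') < real (card V) / 2} \<noteq> {}" by blast
  show ?thesis unfolding mu_def using assms(3)
    by (subst Min_ge_iff[OF mu_set_fin[OF assms(1)] ne]) auto
qed

lemma lb_mu:
  fixes V :: "'a set"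
  assumes sg: "simple_graph V E" and reg: "\<forall>v\<in>V. degree E v = k" and kn: "k < card V"
  shows "k \<le> 2 * mu V E" and "card V + 5 \<le> 2*k \<longrightarrow> k \<le> mu V E"
    and "card V + 3 = 2*k \<longrightarrow> k - 1 \<le> mu V E"
proof -
  have finV: "finite V" using sg by (simp add: simple_graph_def)
  have finE: "finite E" using sg_finE[OF sg] .
  have pos: "0 < card V" using kn by simp
  have key: "k \<le> 2 * card E' \<and> (card V + 5 \<le> 2*k \<longrightarrow> k \<le> card E') \<and> (card V + 3 = 2*k \<longrightarrow> k - 1 \<le> card E')"
    if sub: "E' \<subseteq> E" and tl: "tau_star V (E - E') < real (card V) / 2" for E'
  proof -
    obtain f where f: "frac_vertex_cover V (E - E') f" "(\<Sum>v\<in>V. f v) < real (card V) / 2"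
      using tau_lt_ex[OF tl] by blast
    have FV: "\<forall>e\<in>E - E'. e \<subseteq> V" using sg_sub[OF sg] by blast
    obtain g where g: "\<forall>v\<in>V. half (g v)" "\<forall>u v. {u,v} \<in> E - E' \<longrightarrow> g u + g v \<ge> 1"
      "(\<Sum>v\<in>V. g v) \<le> (\<Sum>v\<in>V. f v)"
      using round_cover[OF finV FV f(1)] by blast
    have sm: "(\<Sum>v\<in>V. g v) < real (card V) / 2" using g(3) f(2) by linarith
    from lb_core[OF sg reg sub g(1) g(2) sm kn] show ?thesis by blast
  qed
  have "(k+1) div 2 \<le> mu V E" using key by (intro mu_ge[OF finE pos]) force
  then show "k \<le> 2 * mu V E" by linarith
  show "card V + 5 \<le> 2*k \<longrightarrow> k \<le> mu V E" using key mu_ge[OF finE pos] by blast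
  show "card V + 3 = 2*k \<longrightarrow> k - 1 \<le> mu V E" using key mu_ge[OF finE pos] by blast
qed

lemma ub_vertex:
  assumes sg: "simple_graph V E" and reg: "\<forall>v\<in>V. degree E v = k" and a: "a \<in> V"
  shows "mu V E \<le> k"
proof -
  have finV: "finite V" using sg by (simp add: simple_graph_def)
  have finE: "finite E" using sg_finE[OF sg] .
  define E0 where "E0 = {e\<in>E. a \<in> e}"
  define f where "f = (\<lambda>v. if v = a then 0 else (1::real)/2)"
  have fc: "frac_vertex_cover V (E - E0) f"
    unfolding frac_vertex_cover_def f_def E0_def by auto
  have "(\<Sum>v\<in>V. f v) = f a + (\<Sum>v\<in>V - {a}. f v)" using sum.remove[OF finV a] by simp
  also have "\<dots> = real (card V - 1) / 2" using finV a by (simp add: f_def)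
  also have "\<dots> < real (card V) / 2" using a finV
  proof -
    have "0 < card V" using a finV card_gt_0_iff by blast
    then show ?thesis by (simp add: of_nat_diff)
  qed
  finally have "tau_star V (E - E0) < real (card V) / 2" using tau_le[OF fc] by linarith
  then have "mu V E \<le> card E0" using mu_le[OF finE] by (simp add: E0_def)
  also have "card E0 = k" using reg a by (simp add: E0_def degree_def)
  finally show ?thesis .
qed


definition nbg :: "nat \<Rightarrow> (nat \<Rightarrow> nat \<Rightarrow> bool) \<Rightarrow> nat set set" where
  "nbg n adj = {{u,v} | u v. u < n \<and> v < n \<and> adj u v}"

lemma nbg_sg: "(\<And>u v. adj u v \<Longrightarrow> u \<noteq> v) \<Longrightarrow> simple_graph {0..<n} (nbg n adj)"
  unfolding simple_graph_def nbg_def by fastforce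

lemma nbg_deg:
  assumes sym: "\<And>u v. u < n \<Longrightarrow> v < n \<Longrightarrow> adj u v \<Longrightarrow> adj v u"
    and irr: "\<And>u. \<not> adj u u" and u: "u < n"
  shows "degree (nbg n adj) u = card {v. v < n \<and> adj u v}"
proof -
  have eq: "{e \<in> nbg n adj. u \<in> e} = (\<lambda>v. {u,v}) ` {v. v < n \<and> adj u v}"
  proof
    show "{e \<in> nbg n adj. u \<in> e} \<subseteq> (\<lambda>v. {u,v}) ` {v. v < n \<and> adj u v}"
    proof
      fix e assume "e \<in> {e \<in> nbg n adj. u \<in> e}"
      then obtain x y where e: "e = {x,y}" "x < n" "y < n" "adj x y" "u \<in> e" unfolding nbg_def by blast
      show "e \<in> (\<lambda>v. {u,v}) ` {v. v < n \<and> adj u v}"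
      proof (cases "u = x")
        case True then show ?thesis using e by auto
      next
        case False then have "u = y" using e by auto
        then show ?thesis using e sym[of x y] by (auto simp: insert_commute)
      qed
    qed
    show "(\<lambda>v. {u,v}) ` {v. v < n \<and> adj u v} \<subseteq> {e \<in> nbg n adj. u \<in> e}"
      using u unfolding nbg_def by blast
  qed
  have inj: "inj_on (\<lambda>v. {u,v}) {v. v < n \<and> adj u v}"
    by (rule inj_onI) (auto simp: doubleton_eq_iff)
  show ?thesis unfolding degree_def eq using card_image[OF inj] by simp
qed

lemma handshake:
  assumes sg: "simple_graph V E"
  shows "(\<Sum>v\<in>V. degree E v) = 2 * card E"
proof -
  have finV: "finite V" using sg by (simp add: simple_graph_def)
  have "(\<Sum>v\<in>V. degree E v) = (\<Sum>e\<in>E. card (e \<inter> V))"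
    unfolding degree_def by (rule card_inc_sum[OF sg_finE[OF sg] finV])
  also have "\<dots> = (\<Sum>e\<in>E. 2)"
  proof (rule sum.cong)
    fix e assume "e \<in> E"
    then obtain u v where "e = {u,v}" "u \<noteq> v" "u \<in> V" "v \<in> V" using sg_edge[OF sg] by blast
    then show "card (e \<inter> V) = 2" by auto
  qed simp
  finally show ?thesis by simp
qed

lemma card_split:
  fixes m n :: nat and P :: "nat \<Rightarrow> bool"
  assumes "m \<le> n"
  shows "card {v. v < n \<and> P v} = card {v. v < m \<and> P v} + card {j. j < n - m \<and> P (m + j)}"
proof -
  have eq: "{v. v < n \<and> P v} = {v. v < m \<and> P v} \<union> (\<lambda>j. m + j) ` {j. j < n - m \<and> P (m + j)}"
  proof
    show "{v. v < n \<and> P v} \<subseteq> {v. v < m \<and> P v} \<union> (\<lambda>j. m + j) ` {j. j < n - m \<and> P (m + j)}"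
    proof
      fix v assume v: "v \<in> {v. v < n \<and> P v}"
      show "v \<in> {v. v < m \<and> P v} \<union> (\<lambda>j. m + j) ` {j. j < n - m \<and> P (m + j)}"
      proof (cases "v < m")
        case True then show ?thesis using v by auto
      next
        case False
        then have "v = m + (v - m)" by linarith
        moreover have "v - m < n - m" using v False by auto
        ultimately show ?thesis using v by (metis (mono_tags, lifting) UnI2 image_eqI mem_Collect_eq)
      qed
    qed
    show "{v. v < m \<and> P v} \<union> (\<lambda>j. m + j) ` {j. j < n - m \<and> P (m + j)} \<subseteq> {v. v < n \<and> P v}"
      using assms by auto
  qed
  have "card ({v. v < m \<and> P v} \<union> (\<lambda>j. m + j) ` {j. j < n - m \<and> P (m + j)}) =
        card {v. v < m \<and> P v} + card ((\<lambda>j. m + j) ` {j. j < n - m \<and> P (m + j)})"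
    by (rule card_Un_disjoint) auto
  also have "card ((\<lambda>j. m + j) ` {j. j < n - m \<and> P (m + j)}) = card {j. j < n - m \<and> P (m + j)}"
    by (rule card_image) (simp add: inj_on_def)
  finally show ?thesis using eq by simp
qed

lemma modcancel: "(x + c) mod (m::nat) = (y + c) mod m \<Longrightarrow> x < m \<Longrightarrow> y < m \<Longrightarrow> x = y"
proof -
  assume h: "(x + c) mod (m::nat) = (y + c) mod m" "x < m" "y < m"
  have "int ((x + c) mod m) = int ((y + c) mod m)" using h by simp
  then have "(int x + int c) mod int m = (int y + int c) mod int m" by (simp add: zmod_int)
  then have "int m dvd (int x + int c) - (int y + int c)" using mod_eq_dvd_iff by blast
  then have d: "int m dvd (int x - int y)" by simp
  show "x = y"
  proof (rule ccontr)
    assume "x \<noteq> y"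
    then have "int x - int y \<noteq> 0" by simp
    from dvd_imp_le_int[OF this d] h show False by simp
  qed
qed

lemma window:
  assumes m: "0 < m" and w: "w \<le> m"
  shows "card {v. v < m \<and> (v + c) mod m < w} = w"
proof -
  define phi where "phi = (\<lambda>v. (v + c) mod m)"
  have inj: "inj_on phi {..<m}"
  proof (rule inj_onI)
    fix x y assume "x \<in> {..<m}" "y \<in> {..<m}" "phi x = phi y"
    then show "x = y" using modcancel[of x c m y] by (auto simp: phi_def)
  qed
  have sub: "phi ` {..<m} \<subseteq> {..<m}" using m by (auto simp: phi_def)
  have surj: "phi ` {..<m} = {..<m}" using endo_inj_surj[OF _ sub inj] by simp
  have "phi ` {v. v < m \<and> phi v < w} = {..<w}"
  proof
    show "phi ` {v. v < m \<and> phi v < w} \<subseteq> {..<w}" by auto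
    show "{..<w} \<subseteq> phi ` {v. v < m \<and> phi v < w}"
    proof
      fix d assume "d \<in> {..<w}"
      then have "d \<in> phi ` {..<m}" using surj w by auto
      then obtain v where "v < m" "d = phi v" by auto
      then show "d \<in> phi ` {v. v < m \<and> phi v < w}" using \<open>d \<in> {..<w}\<close> by auto
    qed
  qed
  moreover have "card (phi ` {v. v < m \<and> phi v < w}) = card {v. v < m \<and> phi v < w}"
    by (rule card_image) (rule inj_on_subset[OF inj], auto)
  ultimately show ?thesis by (simp add: phi_def)
qed

lemma match_card:
  fixes k u :: nat
  assumes "even k" "u < k"
  shows "card {v. v < k \<and> v \<noteq> u \<and> v div 2 = u div 2} = 1"
proof -
  have "{v. v < k \<and> v \<noteq> u \<and> v div 2 = u div 2} = {if even u then u + 1 else u - 1}"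
    using assms by auto presburger+
  then show ?thesis by simp
qed


definition circ :: "nat \<Rightarrow> nat \<Rightarrow> nat \<Rightarrow> nat \<Rightarrow> bool" where
  "circ n h u v \<longleftrightarrow> u \<noteq> v \<and> (v + (n - u) + h) mod n \<le> 2*h"

lemma circ_sym:
  assumes u: "u < n" and v: "v < n" and h: "2*h < n" and c: "circ n h u v"
  shows "circ n h v u"
proof -
  define x where "x = (v + (n - u) + h) mod n"
  have x2: "x \<le> 2*h" using c by (simp add: circ_def x_def)
  have ix: "int x = (int v - int u + int h) mod int n"
  proof -
    have a: "int (v + (n - u) + h) = int v + (int n - int u) + int h" using u by (simp add: of_nat_diff)
    have "int x = int (v + (n - u) + h) mod int n" unfolding x_def by (rule zmod_int)
    also have "\<dots> = (int v + (int n - int u) + int h) mod int n" by (simp only: a)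
    also have "\<dots> = ((int v - int u + int h) + int n) mod int n" by (simp add: algebra_simps)
    also have "\<dots> = (int v - int u + int h) mod int n" by simp
    finally show ?thesis .
  qed
  have b: "int (u + (n - v) + h) = int u + (int n - int v) + int h" using v by (simp add: of_nat_diff)
  have "int ((u + (n - v) + h) mod n) = int (u + (n - v) + h) mod int n" by (rule zmod_int)
  also have "\<dots> = (int u + (int n - int v) + int h) mod int n" by (simp only: b)
  also have "\<dots> = ((int u - int v + int h) + int n) mod int n" by (simp add: algebra_simps)
  also have "\<dots> = (int u - int v + int h) mod int n" by simp
  also have "\<dots> = (2 * int h - (int v - int u + int h)) mod int n" by (simp add: algebra_simps)
  also have "\<dots> = (2 * int h - (int v - int u + int h) mod int n) mod int n" by (simp add: mod_diff_right_eq)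
  also have "\<dots> = (2 * int h - int x) mod int n" using ix by simp
  also have "\<dots> = 2 * int h - int x" using x2 h by (intro mod_pos_pos_trivial) auto
  finally have "int ((u + (n - v) + h) mod n) = 2 * int h - int x" .
  then have "(u + (n - v) + h) mod n \<le> 2*h" using x2 by linarith
  then show ?thesis using c by (auto simp: circ_def)
qed

lemma circ_deg:
  assumes u: "u < n" and h: "2*h < n"
  shows "card {v. v < n \<and> circ n h u v} = 2*h"
proof -
  define A where "A = {v. v < n \<and> (v + (n - u + h)) mod n < 2*h+1}"
  have eq: "{v. v < n \<and> circ n h u v} = A - {u}"
    by (auto simp: circ_def add.assoc A_def)
  have uin: "u \<in> A"
  proof -
    have "u + (n - u + h) = h + n" using u by simp
    then have "(u + (n - u + h)) mod n = h" using h by simp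
    then show ?thesis using u by (simp add: A_def)
  qed
  have cA: "card A = 2*h+1"
    unfolding A_def using h by (intro window) auto
  show ?thesis unfolding eq card_Diff_singleton[OF uin] cA by simp
qed

lemma circ_irr: "\<not> circ n h u u" by (simp add: circ_def)


lemma mlc_eq:
  assumes ex: "simple_graph {0..<n} E0" "\<forall>v<n. degree E0 v = k" "mu {0..<n} E0 \<le> b"
    and all: "\<And>E. simple_graph {0..<n} E \<Longrightarrow> \<forall>v<n. degree E v = k \<Longrightarrow> b \<le> mu {0..<n} E"
  shows "mu_low_const n k = b"
proof -
  define M where "M = {mu {0..<n} E | E. simple_graph {0..<n} E \<and> (\<forall>v<n. degree E v = k)}"
  have "M \<subseteq> mu {0..<n} ` Pow (Pow {0..<n})"
  proof
    fix x assume "x \<in> M"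
    then obtain E where E: "x = mu {0..<n} E" "simple_graph {0..<n} E" unfolding M_def by blast
    then have "E \<in> Pow (Pow {0..<n})" using sg_sub[OF E(2)] by blast
    then show "x \<in> mu {0..<n} ` Pow (Pow {0..<n})" using E(1) by blast
  qed
  then have finM: "finite M" by (rule finite_subset) simp
  have inM: "mu {0..<n} E0 \<in> M" unfolding M_def using ex by blast
  have "Min M \<le> b" using Min_le[OF finM inM] ex(3) by linarith
  moreover have "b \<le> Min M" using finM inM all unfolding M_def
    by (subst Min_ge_iff) auto
  ultimately show ?thesis unfolding mu_low_const_def M_def[symmetric] by simp
qed

lemma ub_cover:
  assumes sg: "simple_graph V E" and sub: "E' \<subseteq> E" and fc: "frac_vertex_cover V (E - E') f"
    and s: "(\<Sum>v\<in>V. f v) < real (card V) / 2"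
  shows "mu V E \<le> card E'"
proof -
  have "tau_star V (E - E') < real (card V) / 2" using tau_le[OF fc] s by linarith
  then show ?thesis using mu_le[OF sg_finE[OF sg] sub] by blast
qed

lemma nbg_edge: "e \<in> nbg n adj \<Longrightarrow> e = {u,v} \<Longrightarrow> \<exists>x y. {u,v} = {x,y} \<and> x < n \<and> y < n \<and> adj x y"
  unfolding nbg_def by blast

lemma G1:
  assumes "even k" "k < n"
  shows "simple_graph {0..<n} (nbg n (circ n (k div 2)))"
    and "\<forall>v<n. degree (nbg n (circ n (k div 2))) v = k"
proof -
  show "simple_graph {0..<n} (nbg n (circ n (k div 2)))"
    by (rule nbg_sg) (auto simp: circ_def)
  have h: "2 * (k div 2) < n" using assms by simp
  show "\<forall>v<n. degree (nbg n (circ n (k div 2))) v = k"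
  proof (intro allI impI)
    fix v assume v: "v < n"
    have "degree (nbg n (circ n (k div 2))) v = card {w. w < n \<and> circ n (k div 2) v w}"
      by (rule nbg_deg) (use circ_sym h circ_irr v in auto)
    also have "\<dots> = k" using circ_deg[OF v h] assms by simp
    finally show "degree (nbg n (circ n (k div 2))) v = k" .
  qed
qed

definition adj2 :: "nat \<Rightarrow> nat \<Rightarrow> nat \<Rightarrow> nat \<Rightarrow> bool" where
  "adj2 q p u v \<longleftrightarrow> u \<noteq> v \<and> ((u < q \<and> v < q \<and> u div 2 = v div 2) \<or> (u < q \<and> q \<le> v) \<or> (q \<le> u \<and> v < q)
      \<or> (q \<le> u \<and> q \<le> v \<and> circ p 1 (u - q) (v - q)))"

definition adjS :: "nat \<Rightarrow> nat \<Rightarrow> nat \<Rightarrow> nat \<Rightarrow> bool" where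
  "adjS q p u v \<longleftrightarrow> q \<le> u \<and> q \<le> v \<and> circ p 1 (u - q) (v - q)"

lemma adj2_sym: "2 < p \<Longrightarrow> u < q + p \<Longrightarrow> v < q + p \<Longrightarrow> adj2 q p u v \<Longrightarrow> adj2 q p v u"
  unfolding adj2_def using circ_sym[of "u - q" p "v - q" 1] by auto

lemma adjS_sym: "2 < p \<Longrightarrow> u < q + p \<Longrightarrow> v < q + p \<Longrightarrow> adjS q p u v \<Longrightarrow> adjS q p v u"
  unfolding adjS_def using circ_sym[of "u - q" p "v - q" 1] by auto

lemma adjS_irr: "\<not> adjS q p u u" by (simp add: adjS_def circ_def)

lemma G2:
  assumes q: "even q" and p: "p = q + 1" "2 < p"
  shows "simple_graph {0..<q+p} (nbg (q+p) (adj2 q p))"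
    and "\<forall>v<q+p. degree (nbg (q+p) (adj2 q p)) v = q + 2"
    and "mu {0..<q+p} (nbg (q+p) (adj2 q p)) \<le> p"
proof -
  show sg: "simple_graph {0..<q+p} (nbg (q+p) (adj2 q p))"
    by (rule nbg_sg) (auto simp: adj2_def)
  have irr: "\<And>u. \<not> adj2 q p u u" by (simp add: adj2_def)
  show "\<forall>v<q+p. degree (nbg (q+p) (adj2 q p)) v = q + 2"
  proof (intro allI impI)
    fix u assume u: "u < q + p"
    have "degree (nbg (q+p) (adj2 q p)) u = card {w. w < q + p \<and> adj2 q p u w}"
      by (rule nbg_deg[OF adj2_sym[OF p(2)] irr u])
    also have "\<dots> = card {w. w < q \<and> adj2 q p u w} + card {j. j < q + p - q \<and> adj2 q p u (q + j)}"
      by (rule card_split) simp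
    also have "\<dots> = q + 2"
    proof (cases "u < q")
      case True
      have "{w. w < q \<and> adj2 q p u w} = {w. w < q \<and> w \<noteq> u \<and> w div 2 = u div 2}"
        using True by (auto simp: adj2_def)
      then have c1: "card {w. w < q \<and> adj2 q p u w} = 1" using match_card[OF q True] by simp
      have "{j. j < q + p - q \<and> adj2 q p u (q + j)} = {j. j < p}"
        using True by (auto simp: adj2_def)
      then have c2: "card {j. j < q + p - q \<and> adj2 q p u (q + j)} = p" by simp
      show ?thesis using c1 c2 p by simp
    next
      case False
      have "{w. w < q \<and> adj2 q p u w} = {w. w < q}"
        using False by (auto simp: adj2_def)
      then have c1: "card {w. w < q \<and> adj2 q p u w} = q" by simp
      have "{j. j < q + p - q \<and> adj2 q p u (q + j)} = {j. j < p \<and> circ p 1 (u - q) j}"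
        using False by (auto simp: adj2_def circ_def)
      moreover have "card {j. j < p \<and> circ p 1 (u - q) j} = 2"
        using circ_deg[of "u - q" p 1] u False p by simp
      ultimately show ?thesis using c1 by simp
    qed
    finally show "degree (nbg (q+p) (adj2 q p)) u = q + 2" .
  qed
  define E' where "E' = nbg (q+p) (adjS q p)"
  have sub: "E' \<subseteq> nbg (q+p) (adj2 q p)"
  proof
    fix e assume "e \<in> E'"
    then obtain x y where xy: "e = {x,y}" "x < q + p" "y < q + p" "adjS q p x y"
      unfolding E'_def nbg_def by blast
    then have "adj2 q p x y" unfolding adjS_def adj2_def circ_def by auto
    then show "e \<in> nbg (q+p) (adj2 q p)" using xy unfolding nbg_def by blast
  qed
  have sgS: "simple_graph {0..<q+p} E'"
    unfolding E'_def by (rule nbg_sg) (auto simp: adjS_def circ_def)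
  have degS: "degree E' u = (if u < q then 0 else 2)" if u: "u < q + p" for u
  proof -
    have "degree E' u = card {w. w < q + p \<and> adjS q p u w}"
      unfolding E'_def by (rule nbg_deg[OF adjS_sym[OF p(2)] adjS_irr u])
    also have "\<dots> = card {w. w < q \<and> adjS q p u w} + card {j. j < q + p - q \<and> adjS q p u (q + j)}"
      by (rule card_split) simp
    also have "\<dots> = (if u < q then 0 else 2)"
    proof (cases "u < q")
      case True then show ?thesis by (simp add: adjS_def)
    next
      case False
      have "{w. w < q \<and> adjS q p u w} = {}" by (auto simp: adjS_def)
      moreover have "{j. j < q + p - q \<and> adjS q p u (q + j)} = {j. j < p \<and> circ p 1 (u - q) j}"
        using False by (auto simp: adjS_def)
      moreover have "card {j. j < p \<and> circ p 1 (u - q) j} = 2"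
        using circ_deg[of "u - q" p 1] u False p by simp
      ultimately show ?thesis using False by simp
    qed
    finally show ?thesis .
  qed
  have "2 * card E' = (\<Sum>v\<in>{0..<q+p}. degree E' v)" using handshake[OF sgS] by simp
  also have "\<dots> = (\<Sum>v\<in>{0..<q+p}. (if v < q then 0 else 2))" using degS by (intro sum.cong) auto
  also have "\<dots> = (\<Sum>v\<in>{0..<q}. (if v < q then 0 else 2)) + (\<Sum>v\<in>{q..<q+p}. (if v < q then 0 else 2))"
    by (rule sum.atLeastLessThan_concat[symmetric]) auto
  also have "\<dots> = 2 * p" by simp
  finally have cE: "card E' = p" by simp
  define f where "f = (\<lambda>v. if v < q then (1::real) else 0)"
  have fc: "frac_vertex_cover {0..<q+p} (nbg (q+p) (adj2 q p) - E') f"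
    unfolding frac_vertex_cover_def
  proof (intro conjI allI impI)
    show "\<forall>v\<in>{0..<q+p}. 0 \<le> f v" by (simp add: f_def)
    fix u v assume e: "{u,v} \<in> nbg (q+p) (adj2 q p) - E'"
    then obtain x y where xy: "{u,v} = {x,y}" "x < q + p" "y < q + p" "adj2 q p x y"
      using nbg_edge by blast
    have "\<not> adjS q p x y" using e xy unfolding E'_def nbg_def by blast
    then have "x < q \<or> y < q" using xy(4) by (auto simp: adj2_def adjS_def)
    then have "f x + f y \<ge> 1" by (auto simp: f_def)
    then show "f u + f v \<ge> 1" using xy(1) by (auto simp: doubleton_eq_iff)
  qed
  have "(\<Sum>v\<in>{0..<q+p}. f v) = (\<Sum>v\<in>{0..<q}. f v) + (\<Sum>v\<in>{q..<q+p}. f v)"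
    by (rule sum.atLeastLessThan_concat[symmetric]) auto
  also have "\<dots> = real q" by (simp add: f_def)
  also have "\<dots> < real (card {0..<q+p}) / 2" using p by simp
  finally have "(\<Sum>v\<in>{0..<q+p}. f v) < real (card {0..<q+p}) / 2" .
  from ub_cover[OF sg sub fc this] cE show "mu {0..<q+p} (nbg (q+p) (adj2 q p)) \<le> p" by simp
qed

definition adj3 :: "nat \<Rightarrow> nat \<Rightarrow> nat \<Rightarrow> nat \<Rightarrow> bool" where
  "adj3 m k u v \<longleftrightarrow> u \<noteq> v \<and> ((u < k \<and> v < k \<and> u div 2 = v div 2)
     \<or> (u < m \<and> m \<le> v \<and> (u + (1 + (v - m))) mod m < k)
     \<or> (m \<le> u \<and> v < m \<and> (v + (1 + (u - m))) mod m < k))"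

definition adjM :: "nat \<Rightarrow> nat \<Rightarrow> nat \<Rightarrow> bool" where
  "adjM k u v \<longleftrightarrow> u \<noteq> v \<and> u < k \<and> v < k \<and> u div 2 = v div 2"

lemma G3:
  assumes k: "even k" "k \<le> m" and t: "m = t + 1"
  shows "simple_graph {0..<m+t} (nbg (m+t) (adj3 m k))"
    and "\<forall>v<m+t. degree (nbg (m+t) (adj3 m k)) v = k"
    and "mu {0..<m+t} (nbg (m+t) (adj3 m k)) \<le> k div 2"
proof -
  show sg: "simple_graph {0..<m+t} (nbg (m+t) (adj3 m k))"
    by (rule nbg_sg) (auto simp: adj3_def)
  have irr: "\<And>u. \<not> adj3 m k u u" by (simp add: adj3_def)
  have sym: "\<And>u v. u < m + t \<Longrightarrow> v < m + t \<Longrightarrow> adj3 m k u v \<Longrightarrow> adj3 m k v u"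
    unfolding adj3_def by auto
  have m0: "0 < m" using t by simp
  show "\<forall>v<m+t. degree (nbg (m+t) (adj3 m k)) v = k"
  proof (intro allI impI)
    fix u assume u: "u < m + t"
    have "degree (nbg (m+t) (adj3 m k)) u = card {w. w < m + t \<and> adj3 m k u w}"
      by (rule nbg_deg[OF sym irr u])
    also have "\<dots> = card {w. w < m \<and> adj3 m k u w} + card {j. j < m + t - m \<and> adj3 m k u (m + j)}"
      by (rule card_split) simp
    also have "\<dots> = k"
    proof (cases "u < m")
      case True
      have c1: "card {w. w < m \<and> adj3 m k u w} = (if u < k then 1 else 0)"
      proof (cases "u < k")
        case True
        have "{w. w < m \<and> adj3 m k u w} = {w. w < k \<and> w \<noteq> u \<and> w div 2 = u div 2}"
          using True \<open>u < m\<close> k by (auto simp: adj3_def)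
        then show ?thesis using match_card[OF k(1) True] True by simp
      next
        case False
        have "{w. w < m \<and> adj3 m k u w} = {}"
          using False \<open>u < m\<close> by (auto simp: adj3_def)
        then show ?thesis using False by simp
      qed
      have win: "card {v. v < m \<and> (v + u) mod m < k} = k" by (rule window[OF m0 k(2)])
      have sp: "card {v. v < m \<and> (v + u) mod m < k} =
          card {v. v < 1 \<and> (v + u) mod m < k} + card {j. j < m - 1 \<and> ((1 + j) + u) mod m < k}"
        by (rule card_split) (use m0 in simp)
      have "{v. v < 1 \<and> (v + u) mod m < k} = (if u < k then {0} else {})" using True by auto
      then have c0: "card {v. v < 1 \<and> (v + u) mod m < k} = (if u < k then 1 else 0)" by simp
      have "{j. j < m + t - m \<and> adj3 m k u (m + j)} = {j. j < m - 1 \<and> ((1 + j) + u) mod m < k}"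
        using True t k(2) by (auto simp: adj3_def ac_simps)
      then have c2: "card {j. j < m + t - m \<and> adj3 m k u (m + j)} = k - (if u < k then 1 else 0)"
        using win sp c0 by simp
      have "u < k \<Longrightarrow> 1 \<le> k" by simp
      then show ?thesis using c1 c2 by auto
    next
      case False
      have "{w. w < m \<and> adj3 m k u w} = {w. w < m \<and> (w + (1 + (u - m))) mod m < k}"
        using False k by (auto simp: adj3_def)
      then have c1: "card {w. w < m \<and> adj3 m k u w} = k" using window[OF m0 k(2), of "1 + (u - m)"] by simp
      have "{j. j < m + t - m \<and> adj3 m k u (m + j)} = {}"
        using False k by (auto simp: adj3_def)
      then show ?thesis using c1 by simp
    qed
    finally show "degree (nbg (m+t) (adj3 m k)) u = k" .
  qed
  define E' where "E' = nbg (m+t) (adjM k)"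
  have sub: "E' \<subseteq> nbg (m+t) (adj3 m k)"
  proof
    fix e assume "e \<in> E'"
    then obtain x y where xy: "e = {x,y}" "x < m + t" "y < m + t" "adjM k x y"
      unfolding E'_def nbg_def by blast
    then have "adj3 m k x y" unfolding adjM_def adj3_def by auto
    then show "e \<in> nbg (m+t) (adj3 m k)" using xy unfolding nbg_def by blast
  qed
  have sgM: "simple_graph {0..<m+t} E'"
    unfolding E'_def by (rule nbg_sg) (auto simp: adjM_def)
  have degM: "degree E' u = (if u < k then 1 else 0)" if u: "u < m + t" for u
  proof -
    have symM: "\<And>u v. u < m + t \<Longrightarrow> v < m + t \<Longrightarrow> adjM k u v \<Longrightarrow> adjM k v u"
      unfolding adjM_def by auto
    have irrM: "\<And>u. \<not> adjM k u u" by (simp add: adjM_def)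
    have "degree E' u = card {w. w < m + t \<and> adjM k u w}"
      unfolding E'_def by (rule nbg_deg[OF symM irrM u])
    also have "\<dots> = (if u < k then 1 else 0)"
    proof (cases "u < k")
      case True
      have "{w. w < m + t \<and> adjM k u w} = {w. w < k \<and> w \<noteq> u \<and> w div 2 = u div 2}"
        using True k by (auto simp: adjM_def)
      then show ?thesis using match_card[OF k(1) True] True by simp
    next
      case False
      have "{w. w < m + t \<and> adjM k u w} = {}" using False by (auto simp: adjM_def)
      then show ?thesis using False by simp
    qed
    finally show ?thesis .
  qed
  have "2 * card E' = (\<Sum>v\<in>{0..<m+t}. degree E' v)" using handshake[OF sgM] by simp
  also have "\<dots> = (\<Sum>v\<in>{0..<m+t}. (if v < k then 1 else 0))" using degM by (intro sum.cong) auto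
  also have "\<dots> = (\<Sum>v\<in>{0..<k}. (if v < k then 1 else 0)) + (\<Sum>v\<in>{k..<m+t}. (if v < k then 1 else 0))"
    by (rule sum.atLeastLessThan_concat[symmetric]) (use k in auto)
  also have "\<dots> = k" by simp
  finally have cE: "card E' = k div 2" by simp
  define f where "f = (\<lambda>v. if v < m then (0::real) else 1)"
  have fc: "frac_vertex_cover {0..<m+t} (nbg (m+t) (adj3 m k) - E') f"
    unfolding frac_vertex_cover_def
  proof (intro conjI allI impI)
    show "\<forall>v\<in>{0..<m+t}. 0 \<le> f v" by (simp add: f_def)
    fix u v assume e: "{u,v} \<in> nbg (m+t) (adj3 m k) - E'"
    then obtain x y where xy: "{u,v} = {x,y}" "x < m + t" "y < m + t" "adj3 m k x y"
      using nbg_edge by blast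
    have "\<not> adjM k x y" using e xy unfolding E'_def nbg_def by blast
    then have "m \<le> x \<or> m \<le> y" using xy(4) by (auto simp: adj3_def adjM_def)
    then have "f x + f y \<ge> 1" by (auto simp: f_def)
    then show "f u + f v \<ge> 1" using xy(1) by (auto simp: doubleton_eq_iff)
  qed
  have "(\<Sum>v\<in>{0..<m+t}. f v) = (\<Sum>v\<in>{0..<m}. f v) + (\<Sum>v\<in>{m..<m+t}. f v)"
    by (rule sum.atLeastLessThan_concat[symmetric]) auto
  also have "\<dots> = real t" by (simp add: f_def)
  also have "\<dots> < real (card {0..<m+t}) / 2" using t by simp
  finally have "(\<Sum>v\<in>{0..<m+t}. f v) < real (card {0..<m+t}) / 2" .
  from ub_cover[OF sg sub fc this] cE show "mu {0..<m+t} (nbg (m+t) (adj3 m k)) \<le> k div 2" by simp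
qed

theorem theorem26:
  fixes n k :: nat
  assumes "k < n" and "odd n" and "even k"
  shows "(int n < 2 * int k - 3 \<longrightarrow> mu_low_const n k = k)
       \<and> (int n = 2 * int k - 3 \<longrightarrow> mu_low_const n k = k - 1)
       \<and> (int n \<ge> 2 * int k - 1 \<longrightarrow> mu_low_const n k = k div 2)"
proof (intro conjI impI)
  have cV: "card {0..<n} = n" by simp
  have regc: "\<forall>v\<in>{0..<n}. degree E v = k" if "\<forall>v<n. degree E v = k" for E using that by auto
  {
    assume h: "int n < 2 * int k - 3"
    then have h5: "n + 5 \<le> 2 * k" using assms by presburger
    show "mu_low_const n k = k"
    proof (rule mlc_eq)
      show "simple_graph {0..<n} (nbg n (circ n (k div 2)))" using G1 assms by blast
      show "\<forall>v<n. degree (nbg n (circ n (k div 2))) v = k" using G1 assms by blast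
      show "mu {0..<n} (nbg n (circ n (k div 2))) \<le> k"
        using ub_vertex[OF G1(1)[OF assms(3,1)] regc[OF G1(2)[OF assms(3,1)]], of 0] assms by simp
      fix E assume "simple_graph {0..<n} E" "\<forall>v<n. degree E v = k"
      then show "k \<le> mu {0..<n} E" using lb_mu(2)[of "{0..<n}" E k] regc h5 assms by simp
    qed
  }
  {
    assume h: "int n = 2 * int k - 3"
    define q where "q = k - 2"
    define p where "p = k - 1"
    have k4: "4 \<le> k" using h assms by presburger
    have q: "even q" "p = q + 1" "2 < p" using k4 assms by (auto simp: q_def p_def)
    have n: "n = q + p" using h k4 by (simp add: q_def p_def)
    have h3: "n + 3 = 2 * k" using h by linarith
    show "mu_low_const n k = k - 1"
    proof (rule mlc_eq)
      show "simple_graph {0..<n} (nbg n (adj2 q p))" using G2(1)[OF q] n by simp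
      have qk: "q + 2 = k" using k4 by (simp add: q_def)
      show "\<forall>v<n. degree (nbg n (adj2 q p)) v = k" using G2(2)[OF q] n qk by simp
      show "mu {0..<n} (nbg n (adj2 q p)) \<le> k - 1" using G2(3)[OF q] n by (simp add: p_def)
      fix E assume "simple_graph {0..<n} E" "\<forall>v<n. degree E v = k"
      then show "k - 1 \<le> mu {0..<n} E" using lb_mu(3)[of "{0..<n}" E k] regc h3 assms by simp
    qed
  }
  {
    assume h: "2 * int k - 1 \<le> int n"
    obtain t where t: "n = 2 * t + 1" using assms(2) oddE by blast
    define m where "m = t + 1"
    have km: "k \<le> m" using h t by (simp add: m_def)
    have n: "n = m + t" using t by (simp add: m_def)
    show "mu_low_const n k = k div 2"
    proof (rule mlc_eq)
      show "simple_graph {0..<n} (nbg n (adj3 m k))" using G3(1)[OF assms(3) km m_def] n by simp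
      show "\<forall>v<n. degree (nbg n (adj3 m k)) v = k" using G3(2)[OF assms(3) km m_def] n by simp
      show "mu {0..<n} (nbg n (adj3 m k)) \<le> k div 2" using G3(3)[OF assms(3) km m_def] n by simp
      fix E assume "simple_graph {0..<n} E" "\<forall>v<n. degree E v = k"
      then have "k \<le> 2 * mu {0..<n} E" using lb_mu(1)[of "{0..<n}" E k] regc assms by simp
      then show "k div 2 \<le> mu {0..<n} E" by linarith
    qed
  }
qed


end
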